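(* Let $1\le t\le n$. The Alexander dual $I_t(L_n)^\vee$ has minimal monomial generating set $\{x_F: F\in C_{n,t}\}$. Writing $n=(t+1)p+q$ with $0\le q\le t$, the largest degree of a minimal generator of $I_t(L_n)^\vee$ equals $2p$ if $q<t$ and $2p+1$ if $q=t$.
   Context: $K$ is a field, $S=K[x_1,\ldots,x_n]$, $I_t(L_n)=(u_1,\ldots,u_{n-t+1})$ with $u_i=x_ix_{i+1}\cdots x_{i+t-1}$, $x_F=\prod_{i\in F}x_i$. The Alexander dual of a squarefree monomial ideal with minimal generators $x_{G_1},\ldots,x_{G_m}$ is generated by all $x_C$ where $C\subseteq[n]$ meets every $G_j$. $C_{n,t}$ is the set of subsets $\{i_1<\cdots<i_r\}\subseteq[n]$ with: (1) $1\le i_1\le t$; (2) $i_2>t$; (3) $1\le i_{j+1}-i_j\le t$ for $1\le j\le r-1$; (4) $i_{j+2}-i_j>t$ for $1\le j\le r-2$; (5) $i_{r-1}<n-t+1$; (6) $n-t+1\le i_r\le n$ (conditions referring to nonexistent indices are vacuous). *)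

theory Defs
  imports Main
begin

text \<open>Squarefree monomials x_F in K[x_1,...,x_n] are represented by their supports
  F \<subseteq> {1..n}; divisibility x_F | x_G is F \<subseteq> G and deg x_F = card F.
  A squarefree monomial ideal is represented by the supports of a generating set.\<close>

text \<open>Supports of the generators u_i = x_i x_(i+1) ... x_(i+t-1) of I_t(L_n).\<close>
definition path_gens :: "nat \<Rightarrow> nat \<Rightarrow> nat set set" where
  "path_gens n t = {{i..i + t - 1} | i. 1 \<le> i \<and> i \<le> n - t + 1}"

text \<open>Supports of the generators x_C of the Alexander dual: all C \<subseteq> [n] meeting every G_j.\<close>
definition alex_dual_gens :: "nat \<Rightarrow> nat set set \<Rightarrow> nat set set" where
  "alex_dual_gens n G = {C. C \<subseteq> {1..n} \<and> (\<forall>g\<in>G. C \<inter> g \<noteq> {})}"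

text \<open>Minimal monomial generating set of the monomial ideal generated by the x_C, C \<in> S:
  the divisibility-minimal (= inclusion-minimal) elements.\<close>
definition minimal_gens :: "nat set set \<Rightarrow> nat set set" where
  "minimal_gens S = {C \<in> S. \<forall>D\<in>S. D \<subseteq> C \<longrightarrow> D = C}"

text \<open>The set C_{n,t}; xs ! j is i_(j+1) (0-indexed list of the sorted elements).\<close>
definition C_set :: "nat \<Rightarrow> nat \<Rightarrow> nat set set" where
  "C_set n t = {F. F \<subseteq> {1..n} \<and>
     (let xs = sorted_list_of_set F; r = length xs in
        r \<ge> 1 \<and>
        1 \<le> xs ! 0 \<and> xs ! 0 \<le> t \<and>
        (r \<ge> 2 \<longrightarrow> xs ! 1 > t) \<and>
        (\<forall>j. j + 1 < r \<longrightarrow> 1 \<le> xs ! (j+1) - xs ! j \<and> xs ! (j+1) - xs ! j \<le> t) \<and>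
        (\<forall>j. j + 2 < r \<longrightarrow> xs ! (j+2) - xs ! j > t) \<and>
        (r \<ge> 2 \<longrightarrow> xs ! (r - 2) < n - t + 1) \<and>
        n - t + 1 \<le> xs ! (r - 1) \<and> xs ! (r - 1) \<le> n)}"

end

theory Submission
  imports Defs
begin

definition cov :: "nat \<Rightarrow> nat \<Rightarrow> nat set \<Rightarrow> bool" where
  "cov n t C \<longleftrightarrow> (\<forall>i. 1 \<le> i \<and> i \<le> n - t + 1 \<longrightarrow> (\<exists>c\<in>C. i \<le> c \<and> c \<le> i + t - 1))"

lemma alex_eq: "alex_dual_gens n (path_gens n t) = {C. C \<subseteq> {1..n} \<and> cov n t C}"
proof -
  have "(\<forall>g\<in>path_gens n t. C \<inter> g \<noteq> {}) \<longleftrightarrow> cov n t C" for C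
    unfolding path_gens_def cov_def
  proof
    assume H: "\<forall>g\<in>{{i..i + t - 1} |i. 1 \<le> i \<and> i \<le> n - t + 1}. C \<inter> g \<noteq> {}"
    show "\<forall>i. 1 \<le> i \<and> i \<le> n - t + 1 \<longrightarrow> (\<exists>c\<in>C. i \<le> c \<and> c \<le> i + t - 1)"
    proof (intro allI impI)
      fix i assume "1 \<le> i \<and> i \<le> n - t + 1"
      then have "C \<inter> {i..i+t-1} \<noteq> {}" using H by blast
      then show "\<exists>c\<in>C. i \<le> c \<and> c \<le> i + t - 1" by auto
    qed
  next
    assume H: "\<forall>i. 1 \<le> i \<and> i \<le> n - t + 1 \<longrightarrow> (\<exists>c\<in>C. i \<le> c \<and> c \<le> i + t - 1)"
    show "\<forall>g\<in>{{i..i + t - 1} |i. 1 \<le> i \<and> i \<le> n - t + 1}. C \<inter> g \<noteq> {}"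
    proof
      fix g assume "g \<in> {{i..i + t - 1} |i. 1 \<le> i \<and> i \<le> n - t + 1}"
      then obtain i where g: "g = {i..i+t-1}" "1 \<le> i \<and> i \<le> n - t + 1" by blast
      then obtain c where "c\<in>C" "i \<le> c" "c \<le> i + t - 1" using H by blast
      then show "C \<inter> g \<noteq> {}" using g by auto
    qed
  qed
  then show ?thesis unfolding alex_dual_gens_def by blast
qed

lemma cov_mono: "cov n t C \<Longrightarrow> C \<subseteq> D \<Longrightarrow> cov n t D"
  unfolding cov_def by blast

lemma min_eq: "minimal_gens (alex_dual_gens n (path_gens n t)) =
   {C. C \<subseteq> {1..n} \<and> cov n t C \<and> (\<forall>x\<in>C. \<not> cov n t (C - {x}))}"
proof (rule set_eqI)
  fix C
  show "C \<in> minimal_gens (alex_dual_gens n (path_gens n t)) \<longleftrightarrow>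
     C \<in> {C. C \<subseteq> {1..n} \<and> cov n t C \<and> (\<forall>x\<in>C. \<not> cov n t (C - {x}))}"
  proof
    assume "C \<in> minimal_gens (alex_dual_gens n (path_gens n t))"
    then have A: "C \<subseteq> {1..n}" "cov n t C" and M: "\<And>D. D \<subseteq> {1..n} \<Longrightarrow> cov n t D \<Longrightarrow> D \<subseteq> C \<Longrightarrow> D = C"
      unfolding minimal_gens_def alex_eq by auto
    have "\<not> cov n t (C - {x})" if "x \<in> C" for x
    proof
      assume "cov n t (C - {x})"
      then have "C - {x} = C" using M[of "C - {x}"] A by auto
      then show False using that by auto
    qed
    then show "C \<in> {C. C \<subseteq> {1..n} \<and> cov n t C \<and> (\<forall>x\<in>C. \<not> cov n t (C - {x}))}" using A by auto
  next
    assume "C \<in> {C. C \<subseteq> {1..n} \<and> cov n t C \<and> (\<forall>x\<in>C. \<not> cov n t (C - {x}))}"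
    then have A: "C \<subseteq> {1..n}" "cov n t C" and P: "\<And>x. x\<in>C \<Longrightarrow> \<not> cov n t (C - {x})" by auto
    have "D = C" if T: "D \<subseteq> {1..n}" "cov n t D" "D \<subseteq> C" for D
    proof (rule ccontr)
      assume "D \<noteq> C"
      then obtain x where "x \<in> C" "x \<notin> D" using T(3) by auto
      then have "D \<subseteq> C - {x}" using T by blast
      then show False using T cov_mono P \<open>x\<in>C\<close> by blast
    qed
    then show "C \<in> minimal_gens (alex_dual_gens n (path_gens n t))"
      unfolding minimal_gens_def alex_eq using A by auto
  qed
qed

lemma sw_less_iff: "sorted_wrt (<) (xs::nat list) \<Longrightarrow> i < length xs \<Longrightarrow> j < length xs \<Longrightarrow> xs!i < xs!j \<longleftrightarrow> i < j"
  by (metis linorder_neqE_nat order.asym sorted_wrt_nth_less)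

lemma sw_le_iff: "sorted_wrt (<) (xs::nat list) \<Longrightarrow> i < length xs \<Longrightarrow> j < length xs \<Longrightarrow> xs!i \<le> xs!j \<longleftrightarrow> i \<le> j"
  by (meson not_le sw_less_iff)

lemma L_imp:
  fixes xs :: "nat list"
  assumes sw: "sorted_wrt (<) xs" and sub: "set xs \<subseteq> {1..n}" and t1: "1 \<le> t" and tn: "t \<le> n"
    and c0: "length xs \<ge> 1" and c1: "xs!0 \<le> t"
    and c2: "length xs \<ge> 2 \<longrightarrow> xs!1 > t"
    and c3: "\<forall>j. j + 1 < length xs \<longrightarrow> xs!(j+1) \<le> xs!j + t"
    and c4: "\<forall>j. j + 2 < length xs \<longrightarrow> xs!(j+2) > xs!j + t"
    and c5: "length xs \<ge> 2 \<longrightarrow> xs!(length xs - 2) < n - t + 1"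
    and c6: "n - t + 1 \<le> xs!(length xs - 1)"
  shows "cov n t (set xs) \<and> (\<forall>x\<in>set xs. \<not> cov n t (set xs - {x}))"
proof
  let ?r = "length xs"
  have inb: "1 \<le> xs!k \<and> xs!k \<le> n" if "k < ?r" for k
  proof -
    have "xs!k \<in> set xs" using that by simp
    then have "xs!k \<in> {1..n}" using sub by blast
    then show ?thesis by simp
  qed
  show "cov n t (set xs)" unfolding cov_def
  proof (intro allI impI)
    fix i assume i: "1 \<le> i \<and> i \<le> n - t + 1"
    have "\<exists>k. k < ?r \<and> i \<le> xs!k"
      using c0 c6 i by (intro exI[of _ "?r - 1"]) auto
    then obtain k where k: "k < ?r \<and> i \<le> xs!k" and kmin0: "\<forall>m < k. \<not> (m < ?r \<and> i \<le> xs!m)"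
      using exists_least_iff[of "\<lambda>k. k < ?r \<and> i \<le> xs!k"] by blast
    then have kmin: "\<And>m. m < k \<Longrightarrow> \<not> (m < ?r \<and> i \<le> xs!m)" by blast
    show "\<exists>c\<in>set xs. i \<le> c \<and> c \<le> i + t - 1"
    proof (cases k)
      case 0
      then show ?thesis using k c1 i t1 by (intro bexI[of _ "xs!k"]) auto
    next
      case (Suc m)
      have "xs!m < i" using kmin[of m] Suc k by auto
      moreover have "xs!(m+1) \<le> xs!m + t" using c3 Suc k by auto
      ultimately show ?thesis using k Suc by (intro bexI[of _ "xs!k"]) auto
    qed
  qed
  show "\<forall>x\<in>set xs. \<not> cov n t (set xs - {x})"
  proof
    fix x assume "x \<in> set xs"
    then obtain k where k: "k < ?r" "x = xs!k" by (metis in_set_conv_nth)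
    have nomem: "\<And>m. m < ?r \<Longrightarrow> xs!m \<in> set xs - {x} \<Longrightarrow> m \<noteq> k"
      using k by auto
    have memE: "\<And>c. c \<in> set xs - {x} \<Longrightarrow> \<exists>m. m < ?r \<and> m \<noteq> k \<and> c = xs!m"
      using k by (auto simp: in_set_conv_nth)
    show "\<not> cov n t (set xs - {x})"
    proof
      assume cv: "cov n t (set xs - {x})"
      show False
      proof (cases "k = 0")
        case True
        have "1 \<le> n - t + 1" by simp
        then obtain c where "c \<in> set xs - {x}" "c \<le> t" using cv t1 unfolding cov_def by fastforce
        then obtain m where m: "m < ?r" "m \<noteq> k" "c = xs!m" using memE by blast
        then have "xs!1 \<le> xs!m" using True sw_le_iff[OF sw, of 1 m] by auto
        then show False using c2 m \<open>c \<le> t\<close> True by auto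
      next
        case False
        show False
        proof (cases "k = ?r - 1")
          case True
          have "1 \<le> n - t + 1" "n - t + 1 \<le> n - t + 1" by simp_all
          then obtain c where "c \<in> set xs - {x}" "n - t + 1 \<le> c" using cv unfolding cov_def by blast
          then obtain m where m: "m < ?r" "m \<noteq> k" "c = xs!m" using memE by blast
          then have "xs!m \<le> xs!(?r - 2)" using True False sw_le_iff[OF sw, of m "?r - 2"] by auto
          then show False using c5 m \<open>n - t + 1 \<le> c\<close> True False by auto
        next
          case False2: False
          have kk: "k - 1 + 2 < ?r" "k - 1 + 1 = k" "k - 1 + 2 = k + 1" using False False2 k by auto
          have "xs!(k-1+2) > xs!(k-1) + t" using c4 kk(1) by blast
          then have g1: "xs!(k+1) > xs!(k-1) + t" using kk by simp
          have "k - 1 + 1 < ?r" using kk by arith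
          then have "xs!(k-1+1) \<le> xs!(k-1) + t" using c3 by blast
          then have g2: "xs!k \<le> xs!(k-1) + t" using kk by simp
          have "xs!(k+1) \<le> n" using inb kk by auto
          then have "1 \<le> xs!(k-1) + 1 \<and> xs!(k-1) + 1 \<le> n - t + 1" using g1 by auto
          then obtain c where c: "c \<in> set xs - {x}" "xs!(k-1) + 1 \<le> c" "c \<le> xs!(k-1) + 1 + t - 1"
            using cv unfolding cov_def by blast
          then obtain m where m: "m < ?r" "m \<noteq> k" "c = xs!m" using memE by blast
          have "k - 1 < m" using sw_less_iff[OF sw, of "k-1" m] m c kk by auto
          moreover have "m < k + 1" using sw_less_iff[OF sw, of m "k+1"] m c kk g1 by auto
          ultimately show False using m by auto
        qed
      qed
    qed
  qed
qed

lemma cov_remove: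
  assumes "cov n t C" "x \<in> C"
    and "\<And>i. 1 \<le> i \<Longrightarrow> i \<le> n - t + 1 \<Longrightarrow> i \<le> x \<Longrightarrow> x \<le> i + t - 1 \<Longrightarrow> \<exists>y\<in>C. y \<noteq> x \<and> i \<le> y \<and> y \<le> i + t - 1"
  shows "cov n t (C - {x})"
  unfolding cov_def
proof (intro allI impI)
  fix i assume i: "1 \<le> i \<and> i \<le> n - t + 1"
  then obtain c where c: "c \<in> C" "i \<le> c" "c \<le> i + t - 1" using assms(1) unfolding cov_def by blast
  show "\<exists>c\<in>C - {x}. i \<le> c \<and> c \<le> i + t - 1"
  proof (cases "c = x")
    case True
    then show ?thesis using assms(3)[of i] i c by blast
  next
    case False
    then show ?thesis using c by blast
  qed
qed

lemma imp_L:
  fixes xs :: "nat list"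
  assumes sw: "sorted_wrt (<) xs" and sub: "set xs \<subseteq> {1..n}" and t1: "1 \<le> t" and tn: "t \<le> n"
    and cv: "cov n t (set xs)" and pr: "\<forall>x\<in>set xs. \<not> cov n t (set xs - {x})"
  shows "length xs \<ge> 1 \<and> xs!0 \<le> t \<and> (length xs \<ge> 2 \<longrightarrow> xs!1 > t)
    \<and> (\<forall>j. j + 1 < length xs \<longrightarrow> xs!(j+1) \<le> xs!j + t)
    \<and> (\<forall>j. j + 2 < length xs \<longrightarrow> xs!(j+2) > xs!j + t)
    \<and> (length xs \<ge> 2 \<longrightarrow> xs!(length xs - 2) < n - t + 1)
    \<and> n - t + 1 \<le> xs!(length xs - 1)"
proof -
  let ?r = "length xs"
  have inb: "1 \<le> xs!k \<and> xs!k \<le> n" if "k < ?r" for k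
  proof -
    have "xs!k \<in> set xs" using that by simp
    then have "xs!k \<in> {1..n}" using sub by blast
    then show ?thesis by simp
  qed
  have memE: "\<And>c. c \<in> set xs \<Longrightarrow> \<exists>m. m < ?r \<and> c = xs!m"
    by (auto simp: in_set_conv_nth)
  have w1: "1 \<le> n - t + 1" by simp
  then obtain c1 where c1: "c1 \<in> set xs" "c1 \<le> t" using cv t1 unfolding cov_def by fastforce
  have wl: "n - t + 1 \<le> n - t + 1" by simp
  obtain cl where cl: "cl \<in> set xs" "n - t + 1 \<le> cl" using cv w1 unfolding cov_def by blast
  have r1: "?r \<ge> 1" using c1 by (cases xs) auto
  have ne: "xs \<noteq> []" using c1 by auto
  obtain m1 where m1: "m1 < ?r" "c1 = xs!m1" using memE c1 by blast
  have "0 < ?r" using m1(1) by linarith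
  then have "xs!0 \<le> xs!m1" using sw_le_iff[OF sw, of 0 m1] m1 by blast
  then have a1: "xs!0 \<le> t" using m1 c1 by simp
  obtain ml where ml: "ml < ?r" "cl = xs!ml" using memE cl by blast
  have "?r - 1 < ?r" "ml \<le> ?r - 1" using ml(1) by linarith+
  then have "xs!ml \<le> xs!(?r - 1)" using sw_le_iff[OF sw, of ml "?r - 1"] ml by blast
  then have a6: "n - t + 1 \<le> xs!(?r - 1)" using ml cl by simp
  have a2: "xs!1 > t" if "?r \<ge> 2"
  proof (rule ccontr)
    assume H: "\<not> t < xs!1"
    have "cov n t (set xs - {xs!0})"
    proof (rule cov_remove[OF cv])
      show "xs!0 \<in> set xs" using ne by simp
      fix i assume "1 \<le> i" "i \<le> n - t + 1" "i \<le> xs!0" "xs!0 \<le> i + t - 1"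
      moreover have "xs!0 < xs!1" using sw_less_iff[OF sw, of 0 1] that ne by auto
      ultimately show "\<exists>y\<in>set xs. y \<noteq> xs!0 \<and> i \<le> y \<and> y \<le> i + t - 1"
        using H that by (intro bexI[of _ "xs!1"]) auto
    qed
    then show False using pr ne by simp
  qed
  have a3: "xs!(j+1) \<le> xs!j + t" if j: "j + 1 < ?r" for j
  proof (rule ccontr)
    assume H: "\<not> xs!(j+1) \<le> xs!j + t"
    have "xs!(j+1) \<le> n" using inb j by blast
    then have "1 \<le> xs!j + 1 \<and> xs!j + 1 \<le> n - t + 1" using H by auto
    then obtain c where c: "c \<in> set xs" "xs!j + 1 \<le> c" "c \<le> xs!j + 1 + t - 1"
      using cv unfolding cov_def by blast
    then obtain m where m: "m < ?r" "c = xs!m" using memE by blast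
    have "j < m" using sw_less_iff[OF sw, of j m] m c j by auto
    moreover have "m < j + 1" using sw_less_iff[OF sw, of m "j+1"] m c j H by auto
    ultimately show False by auto
  qed
  have a4: "xs!(j+2) > xs!j + t" if j: "j + 2 < ?r" for j
  proof (rule ccontr)
    assume H: "\<not> xs!(j+2) > xs!j + t"
    have l1: "xs!j < xs!(j+1)" "xs!(j+1) < xs!(j+2)"
      using sw_less_iff[OF sw, of j "j+1"] sw_less_iff[OF sw, of "j+1" "j+2"] j by auto
    have "cov n t (set xs - {xs!(j+1)})"
    proof (rule cov_remove[OF cv])
      show "xs!(j+1) \<in> set xs" using j by simp
      fix i assume i: "1 \<le> i" "i \<le> n - t + 1" "i \<le> xs!(j+1)" "xs!(j+1) \<le> i + t - 1"
      show "\<exists>y\<in>set xs. y \<noteq> xs!(j+1) \<and> i \<le> y \<and> y \<le> i + t - 1"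
      proof (cases "i \<le> xs!j")
        case True
        then show ?thesis using i l1 j by (intro bexI[of _ "xs!j"]) auto
      next
        case False
        then show ?thesis using i l1 j H t1 by (intro bexI[of _ "xs!(j+2)"]) auto
      qed
    qed
    then show False using pr j by simp
  qed
  have a5: "xs!(?r - 2) < n - t + 1" if r2: "?r \<ge> 2"
  proof (rule ccontr)
    assume H: "\<not> xs!(?r - 2) < n - t + 1"
    have l1: "xs!(?r - 2) < xs!(?r - 1)" using sw_less_iff[OF sw, of "?r - 2" "?r - 1"] r2 by auto
    have "cov n t (set xs - {xs!(?r - 1)})"
    proof (rule cov_remove[OF cv])
      show "xs!(?r - 1) \<in> set xs" using r2 by simp
      fix i assume i: "1 \<le> i" "i \<le> n - t + 1" "i \<le> xs!(?r - 1)" "xs!(?r - 1) \<le> i + t - 1"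
      show "\<exists>y\<in>set xs. y \<noteq> xs!(?r - 1) \<and> i \<le> y \<and> y \<le> i + t - 1"
        using i l1 r2 H by (intro bexI[of _ "xs!(?r - 2)"]) auto
    qed
    then show False using pr r2 by simp
  qed
  show ?thesis using r1 a1 a2 a3 a4 a5 a6 by blast
qed

lemma Cset_eq:
  assumes t1: "1 \<le> t" and tn: "t \<le> n"
  shows "C_set n t = {C. C \<subseteq> {1..n} \<and> cov n t C \<and> (\<forall>x\<in>C. \<not> cov n t (C - {x}))}"
proof (rule set_eqI)
  fix C
  show "C \<in> C_set n t \<longleftrightarrow> C \<in> {C. C \<subseteq> {1..n} \<and> cov n t C \<and> (\<forall>x\<in>C. \<not> cov n t (C - {x}))}"
  proof (cases "C \<subseteq> {1..n}")
    case False
    then show ?thesis unfolding C_set_def by auto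
  next
    case True
    have fin: "finite C" using True finite_subset by blast
    define xs where "xs = sorted_list_of_set C"
    have sw: "sorted_wrt (<) xs" unfolding xs_def by simp
    have sx: "set xs = C" unfolding xs_def using fin by simp
    have sub: "set xs \<subseteq> {1..n}" using sx True by simp
    let ?r = "length xs"
    have inb: "1 \<le> xs!k \<and> xs!k \<le> n" if "k < ?r" for k
    proof -
      have "xs!k \<in> set xs" using that by simp
      then have "xs!k \<in> {1..n}" using sub by blast
      then show ?thesis by simp
    qed
    have lt: "xs!j < xs!(j+1)" if "j + 1 < ?r" for j
      using sw_less_iff[OF sw, of j "j+1"] that by simp
    have "C \<in> C_set n t \<longleftrightarrow>
        (?r \<ge> 1 \<and>
        1 \<le> xs ! 0 \<and> xs ! 0 \<le> t \<and>
        (?r \<ge> 2 \<longrightarrow> xs ! 1 > t) \<and>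
        (\<forall>j. j + 1 < ?r \<longrightarrow> 1 \<le> xs ! (j+1) - xs ! j \<and> xs ! (j+1) - xs ! j \<le> t) \<and>
        (\<forall>j. j + 2 < ?r \<longrightarrow> xs ! (j+2) - xs ! j > t) \<and>
        (?r \<ge> 2 \<longrightarrow> xs ! (?r - 2) < n - t + 1) \<and>
        n - t + 1 \<le> xs ! (?r - 1) \<and> xs ! (?r - 1) \<le> n)"
      unfolding C_set_def xs_def Let_def using True by simp
    also have "\<dots> \<longleftrightarrow> (?r \<ge> 1 \<and> xs!0 \<le> t \<and> (?r \<ge> 2 \<longrightarrow> xs!1 > t)
    \<and> (\<forall>j. j + 1 < ?r \<longrightarrow> xs!(j+1) \<le> xs!j + t)
    \<and> (\<forall>j. j + 2 < ?r \<longrightarrow> xs!(j+2) > xs!j + t)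
    \<and> (?r \<ge> 2 \<longrightarrow> xs!(?r - 2) < n - t + 1)
    \<and> n - t + 1 \<le> xs!(?r - 1))" (is "?A \<longleftrightarrow> ?B")
    proof
      assume A: ?A
      have "\<forall>j. j + 1 < ?r \<longrightarrow> xs!(j+1) \<le> xs!j + t"
      proof (intro allI impI)
        fix j assume j: "j + 1 < ?r"
        then have "xs ! (j+1) - xs ! j \<le> t" using A by blast
        then show "xs!(j+1) \<le> xs!j + t" by linarith
      qed
      moreover have "\<forall>j. j + 2 < ?r \<longrightarrow> xs!(j+2) > xs!j + t"
      proof (intro allI impI)
        fix j assume j: "j + 2 < ?r"
        then have "xs ! (j+2) - xs ! j > t" using A by blast
        then show "xs!(j+2) > xs!j + t" by linarith
      qed
      ultimately show ?B using A by blast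
    next
      assume B: ?B
      have ne: "0 < ?r" using B by linarith
      have "\<forall>j. j + 1 < ?r \<longrightarrow> 1 \<le> xs ! (j+1) - xs ! j \<and> xs ! (j+1) - xs ! j \<le> t"
      proof (intro allI impI)
        fix j assume j: "j + 1 < ?r"
        then have "xs!(j+1) \<le> xs!j + t" using B by blast
        then show "1 \<le> xs ! (j+1) - xs ! j \<and> xs ! (j+1) - xs ! j \<le> t" using lt[OF j] by linarith
      qed
      moreover have "\<forall>j. j + 2 < ?r \<longrightarrow> xs ! (j+2) - xs ! j > t"
      proof (intro allI impI)
        fix j assume j: "j + 2 < ?r"
        then have "xs!(j+2) > xs!j + t" using B by blast
        then show "xs ! (j+2) - xs ! j > t" by linarith
      qed
      moreover have "1 \<le> xs!0" using inb[OF ne] by blast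
      moreover have "?r - 1 < ?r" using ne by linarith
      then have "xs!(?r - 1) \<le> n" using inb by blast
      ultimately show ?A using B by blast
    qed
    also have "\<dots> \<longleftrightarrow> cov n t (set xs) \<and> (\<forall>x\<in>set xs. \<not> cov n t (set xs - {x}))"
      using L_imp[OF sw sub t1 tn] imp_L[OF sw sub t1 tn] by blast
    finally show ?thesis using True sx by auto
  qed
qed

lemma mul_bound:
  fixes a p s t :: nat
  assumes "a * (t+1) \<le> (t+1) * p + s" "s < t + 1"
  shows "a \<le> p"
proof (rule ccontr)
  assume "\<not> a \<le> p"
  then have "p + 1 \<le> a" by simp
  then have "(p+1) * (t+1) \<le> a * (t+1)" by (rule mult_le_mono1)
  then show False using assms by (simp add: algebra_simps)
qed

lemma grow:
  fixes xs :: "nat list"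
  assumes c0: "1 \<le> xs!0" and c2: "length xs \<ge> 2 \<longrightarrow> xs!1 > t"
    and c4: "\<forall>j. j + 2 < length xs \<longrightarrow> xs!(j+2) > xs!j + t"
  shows "(2*m < length xs \<longrightarrow> 1 + m*(t+1) \<le> xs!(2*m)) \<and> (2*m+1 < length xs \<longrightarrow> (m+1)*(t+1) \<le> xs!(2*m+1))"
proof (induction m)
  case 0
  then show ?case using c0 c2 by auto
next
  case (Suc m)
  have e: "2 * Suc m = 2*m + 2" "2 * Suc m + 1 = (2*m+1) + 2" by simp_all
  show ?case
  proof (intro conjI impI)
    assume h: "2 * Suc m < length xs"
    then have "2*m+2 < length xs" using e by simp
    then have "xs!(2*m+2) > xs!(2*m) + t" using c4 by blast
    moreover have "1 + m*(t+1) \<le> xs!(2*m)" using Suc.IH h by simp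
    ultimately show "1 + Suc m * (t + 1) \<le> xs ! (2 * Suc m)" using e by simp
  next
    assume h: "2 * Suc m + 1 < length xs"
    then have "2*m+1+2 < length xs" using e by simp
    then have "xs!(2*m+1+2) > xs!(2*m+1) + t" using c4 by blast
    moreover have "(m+1)*(t+1) \<le> xs!(2*m+1)" using Suc.IH h by simp
    ultimately show "(Suc m + 1) * (t + 1) \<le> xs ! (2 * Suc m + 1)" using e by simp
  qed
qed

lemma len_bound:
  fixes xs :: "nat list"
  assumes sub: "set xs \<subseteq> {1..n}" and t1: "1 \<le> t" and tn: "t \<le> n"
    and np: "n = (t+1)*p + q" and qt: "q \<le> t"
    and c0: "length xs \<ge> 1"
    and c2: "length xs \<ge> 2 \<longrightarrow> xs!1 > t"
    and c4: "\<forall>j. j + 2 < length xs \<longrightarrow> xs!(j+2) > xs!j + t"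
    and c5: "length xs \<ge> 2 \<longrightarrow> xs!(length xs - 2) < n - t + 1"
  shows "length xs \<le> (if q < t then 2*p else 2*p+1)"
proof -
  let ?r = "length xs"
  have inb: "1 \<le> xs!k \<and> xs!k \<le> n" if "k < ?r" for k
  proof -
    have "xs!k \<in> set xs" using that by simp
    then have "xs!k \<in> {1..n}" using sub by blast
    then show ?thesis by simp
  qed
  have "0 < ?r" using c0 by linarith
  then have x0: "1 \<le> xs!0" using inb by blast
  note G = grow[OF x0 c2 c4]
  have p1: "q < t \<Longrightarrow> 1 \<le> p" using tn np by (cases p) auto
  consider "?r = 1" | m where "?r = 2*m+2" | m where "?r = 2*m+3"
  proof -
    have "?r = 1 \<or> (\<exists>m. ?r = 2*m+2) \<or> (\<exists>m. ?r = 2*m+3)" using c0 by presburger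
    then show ?thesis using that by blast
  qed
  then show ?thesis
  proof cases
    case 1
    then show ?thesis using p1 by auto
  next
    case (2 m)
    have "(m+1)*(t+1) \<le> xs!(2*m+1)" using G[of m] 2 by simp
    moreover have "xs!(2*m+1) \<le> n" using inb 2 by simp
    ultimately have "(m+1)*(t+1) \<le> (t+1)*p + q" using np by simp
    moreover have "q < t + 1" using qt by simp
    ultimately have "m + 1 \<le> p" by (rule mul_bound)
    then show ?thesis using 2 by simp
  next
    case (3 m)
    have "(m+1)*(t+1) \<le> xs!(2*m+1)" using G[of m] 3 by simp
    moreover have "xs!(2*m+1) < n - t + 1" using c5 3 by simp
    ultimately have "(m+2)*(t+1) \<le> (t+1)*p + (q + 1)" using np tn by (simp add: algebra_simps)
    show ?thesis
    proof (cases "q < t")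
      case True
      then have "q + 1 < t + 1" by simp
      with \<open>(m+2)*(t+1) \<le> (t+1)*p + (q + 1)\<close> have "m + 2 \<le> p" by (rule mul_bound)
      then show ?thesis using 3 True by simp
    next
      case False
      then have "q = t" using qt by simp
      then have "(m+2)*(t+1) \<le> (t+1)*(p+1) + 0" using \<open>(m+2)*(t+1) \<le> (t+1)*p + (q + 1)\<close> by (simp add: algebra_simps)
      moreover have "(0::nat) < t + 1" by simp
      ultimately have "m + 2 \<le> p + 1" by (rule mul_bound)
      then show ?thesis using 3 False by simp
    qed
  qed
qed

definition ff :: "nat \<Rightarrow> nat \<Rightarrow> nat" where
  "ff t j = (j div 2)*(t+1) + (if even j then 1 else t+1)"

lemma ff_even: "ff t (2*k) = k*(t+1) + 1" unfolding ff_def by simp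
lemma ff_odd: "ff t (2*k+1) = (k+1)*(t+1)" unfolding ff_def by simp

lemma ff_Suc: "ff t (j+1) = ff t j + (if even j then t else 1)"
proof -
  obtain k where "j = 2*k \<or> j = 2*k+1" by (metis oddE evenE)
  then show ?thesis
  proof
    assume j: "j = 2*k"
    show ?thesis using ff_even[of t k] ff_odd[of t k] j by simp
  next
    assume j: "j = 2*k+1"
    have "j + 1 = 2*(k+1)" using j by simp
    then show ?thesis using ff_even[of t "k+1"] ff_odd[of t k] j by simp
  qed
qed

lemma ff_Suc2: "ff t (j+2) = ff t j + t + 1"
  using ff_Suc[of t j] ff_Suc[of t "j+1"] by auto

lemma ff_ge1: "1 \<le> ff t j" unfolding ff_def by simp

lemma ff_mono: assumes "1 \<le> t" shows "strict_mono (ff t)"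
  unfolding strict_mono_Suc_iff
proof
  fix j show "ff t j < ff t (Suc j)" using ff_Suc[of t j] assms by simp
qed

lemma construct_gen:
  assumes t1: "1 \<le> t" and r1: "r \<ge> 1" and l1: "ff t (r - 1) \<le> n" and l2: "n - t + 1 \<le> ff t (r - 1)"
    and l3: "r \<ge> 2 \<longrightarrow> ff t (r - 2) < n - t + 1"
  shows "\<exists>xs. sorted_wrt (<) xs \<and> set xs \<subseteq> {1..n} \<and> length xs = r
    \<and> length xs \<ge> 1 \<and> xs!0 \<le> t \<and> (length xs \<ge> 2 \<longrightarrow> xs!1 > t)
    \<and> (\<forall>j. j + 1 < length xs \<longrightarrow> xs!(j+1) \<le> xs!j + t)
    \<and> (\<forall>j. j + 2 < length xs \<longrightarrow> xs!(j+2) > xs!j + t)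
    \<and> (length xs \<ge> 2 \<longrightarrow> xs!(length xs - 2) < n - t + 1)
    \<and> n - t + 1 \<le> xs!(length xs - 1)"
proof -
  define xs where "xs = map (ff t) [0..<r]"
  have len: "length xs = r" unfolding xs_def by simp
  have nth: "\<And>j. j < r \<Longrightarrow> xs!j = ff t j" unfolding xs_def by simp
  have sm: "strict_mono (ff t)" using ff_mono t1 .
  have sw: "sorted_wrt (<) xs"
    unfolding sorted_wrt_iff_nth_less len using nth sm by (simp add: strict_monoD)
  have sub: "set xs \<subseteq> {1..n}"
  proof
    fix x assume "x \<in> set xs"
    then obtain j where j: "j < r" "x = ff t j" unfolding xs_def by auto
    have "ff t j \<le> ff t (r - 1)" using j sm by (simp add: strict_mono_less_eq)
    then show "x \<in> {1..n}" using j l1 ff_ge1[of t j] by simp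
  qed
  have r0: "0 < r" using r1 by linarith
  have a1: "xs!0 \<le> t" using nth[OF r0] t1 unfolding ff_def by simp
  have a2: "xs!1 > t" if "length xs \<ge> 2"
  proof -
    have "1 < r" using that len by linarith
    then have "xs!1 = ff t 1" using nth by blast
    then show ?thesis unfolding ff_def by simp
  qed
  have a3: "xs!(j+1) \<le> xs!j + t" if "j + 1 < length xs" for j
  proof -
    have "xs!(j+1) = ff t (j+1)" "xs!j = ff t j" using that len nth by auto
    then show ?thesis using ff_Suc[of t j] t1 by auto
  qed
  have a4: "xs!(j+2) > xs!j + t" if "j + 2 < length xs" for j
  proof -
    have "xs!(j+2) = ff t (j+2)" "xs!j = ff t j" using that len nth by auto
    then show ?thesis using ff_Suc2[of t j] by auto
  qed
  have a5: "xs!(length xs - 2) < n - t + 1" if "length xs \<ge> 2"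
  proof -
    have "r - 2 < r" "r \<ge> 2" using that len by linarith+
    then show ?thesis using nth l3 len by auto
  qed
  have a6: "n - t + 1 \<le> xs!(length xs - 1)"
  proof -
    have "r - 1 < r" using r0 by linarith
    then show ?thesis using nth l2 len by auto
  qed
  show ?thesis using sw sub len r1 a1 a2 a3 a4 a5 a6 by blast
qed

theorem corollary2p9:
  fixes n t :: nat
  assumes "1 \<le> t" and "t \<le> n"
  shows "minimal_gens (alex_dual_gens n (path_gens n t)) = C_set n t
       \<and> Max (card ` minimal_gens (alex_dual_gens n (path_gens n t)))
           = (if n mod (t + 1) < t then 2 * (n div (t + 1)) else 2 * (n div (t + 1)) + 1)"
proof -
  note t1 = assms(1) and tn = assms(2)
  define M where "M = minimal_gens (alex_dual_gens n (path_gens n t))"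
  have MC: "M = C_set n t" unfolding M_def min_eq Cset_eq[OF t1 tn] ..
  have Meq: "M = {C. C \<subseteq> {1..n} \<and> cov n t C \<and> (\<forall>x\<in>C. \<not> cov n t (C - {x}))}"
    unfolding M_def min_eq ..
  define p where "p = n div (t+1)"
  define q where "q = n mod (t+1)"
  have np: "n = (t+1)*p + q" unfolding p_def q_def by (metis div_mult_mod_eq mult.commute)
  have qt: "q \<le> t" unfolding q_def
    using mod_less_divisor[of "t+1" n] by simp
  define T where "T = (if q < t then 2*p else 2*p+1)"
  have ub: "card F \<le> T" if F: "F \<in> M" for F
  proof -
    have Fs: "F \<subseteq> {1..n}" "cov n t F" "\<forall>x\<in>F. \<not> cov n t (F - {x})" using F Meq by auto
    have fin: "finite F" using Fs(1) finite_subset by blast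
    define xs where "xs = sorted_list_of_set F"
    have sw: "sorted_wrt (<) xs" unfolding xs_def by simp
    have sx: "set xs = F" unfolding xs_def using fin by simp
    have cl: "card F = length xs" unfolding xs_def by simp
    have sub: "set xs \<subseteq> {1..n}" using sx Fs by simp
    have L: "length xs \<ge> 1 \<and> xs!0 \<le> t \<and> (length xs \<ge> 2 \<longrightarrow> xs!1 > t)
    \<and> (\<forall>j. j + 1 < length xs \<longrightarrow> xs!(j+1) \<le> xs!j + t)
    \<and> (\<forall>j. j + 2 < length xs \<longrightarrow> xs!(j+2) > xs!j + t)
    \<and> (length xs \<ge> 2 \<longrightarrow> xs!(length xs - 2) < n - t + 1)
    \<and> n - t + 1 \<le> xs!(length xs - 1)"
      using imp_L[OF sw sub t1 tn] Fs sx by simp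
    have "length xs \<le> T" unfolding T_def
      using len_bound[OF sub t1 tn np qt] L by blast
    then show ?thesis using cl by simp
  qed
  have ex: "\<exists>xs. sorted_wrt (<) xs \<and> set xs \<subseteq> {1..n} \<and> length xs = T
    \<and> length xs \<ge> 1 \<and> xs!0 \<le> t \<and> (length xs \<ge> 2 \<longrightarrow> xs!1 > t)
    \<and> (\<forall>j. j + 1 < length xs \<longrightarrow> xs!(j+1) \<le> xs!j + t)
    \<and> (\<forall>j. j + 2 < length xs \<longrightarrow> xs!(j+2) > xs!j + t)
    \<and> (length xs \<ge> 2 \<longrightarrow> xs!(length xs - 2) < n - t + 1)
    \<and> n - t + 1 \<le> xs!(length xs - 1)"
  proof (cases "q < t")
    case True
    then have "p \<noteq> 0" using tn np by (cases p) auto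
    then obtain p' where p': "p = Suc p'" by (cases p) auto
    have T: "T = 2*p' + 2" unfolding T_def using True p' by simp
    have e1: "T - 1 = 2*p'+1" "T - 2 = 2*p'" using T by simp_all
    have nn: "n = p'*(t+1) + t + 1 + q" using np p' by (simp add: algebra_simps)
    show ?thesis
    proof (rule construct_gen[OF t1])
      show "1 \<le> T" using T by simp
      show "ff t (T - 1) \<le> n" unfolding e1 ff_odd using nn by (simp add: algebra_simps)
      show "n - t + 1 \<le> ff t (T - 1)" unfolding e1 ff_odd using nn True by (simp add: algebra_simps)
      show "2 \<le> T \<longrightarrow> ff t (T - 2) < n - t + 1" unfolding e1 ff_even using nn by (simp add: algebra_simps)
    qed
  next
    case False
    then have qq: "q = t" using qt by simp
    have T: "T = 2*p + 1" unfolding T_def using False by simp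
    have e1: "T - 1 = 2*p" using T by simp
    have nn: "n = p*(t+1) + t" using np qq by (simp add: algebra_simps)
    show ?thesis
    proof (rule construct_gen[OF t1])
      show "1 \<le> T" using T by simp
      show "ff t (T - 1) \<le> n" unfolding e1 ff_even using nn t1 by (simp add: algebra_simps)
      show "n - t + 1 \<le> ff t (T - 1)" unfolding e1 ff_even using nn by (simp add: algebra_simps)
      show "2 \<le> T \<longrightarrow> ff t (T - 2) < n - t + 1"
      proof
        assume "2 \<le> T"
        then obtain p' where p': "p = Suc p'" using T by (cases p) auto
        have "T - 2 = 2*p'+1" using T p' by simp
        then have "ff t (T - 2) = (p'+1)*(t+1)" using ff_odd[of t p'] by simp
        then show "ff t (T - 2) < n - t + 1" using nn p' by (simp add: algebra_simps)
      qed
    qed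
  qed
  then obtain xs where xs: "sorted_wrt (<) xs" "set xs \<subseteq> {1..n}" "length xs = T"
    and L: "length xs \<ge> 1 \<and> xs!0 \<le> t \<and> (length xs \<ge> 2 \<longrightarrow> xs!1 > t)
    \<and> (\<forall>j. j + 1 < length xs \<longrightarrow> xs!(j+1) \<le> xs!j + t)
    \<and> (\<forall>j. j + 2 < length xs \<longrightarrow> xs!(j+2) > xs!j + t)
    \<and> (length xs \<ge> 2 \<longrightarrow> xs!(length xs - 2) < n - t + 1)
    \<and> n - t + 1 \<le> xs!(length xs - 1)" by blast
  have "cov n t (set xs) \<and> (\<forall>x\<in>set xs. \<not> cov n t (set xs - {x}))"
    using L_imp[OF xs(1) xs(2) t1 tn] L by blast
  then have inM: "set xs \<in> M" using Meq xs(2) by blast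
  have "distinct xs" using xs(1) strict_sorted_iff by blast
  then have cT: "card (set xs) = T" using xs(3) distinct_card by metis
  have finM: "finite M" using Meq by (auto intro: finite_subset[of _ "Pow {1..n}"])
  have "Max (card ` M) = T"
  proof (rule Max_eqI)
    show "finite (card ` M)" using finM by simp
    show "\<And>y. y \<in> card ` M \<Longrightarrow> y \<le> T" using ub by blast
    show "T \<in> card ` M" using inM cT by force
  qed
  then show ?thesis using MC unfolding M_def T_def p_def q_def by simp
qed

end
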